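(* Let $\mathcal{F}=(\mathcal{F}_1,\dots,\mathcal{F}_r)$ be a flag on $\mathbb{F}_{q^n}$ whose best friend is the subfield $\mathbb{F}_{q^m}$, and let $\beta\in\mathbb{F}_{q^n}^\ast\setminus\mathbb{F}_{q^m}^\ast$. (1) If exactly $j\geq 1$ of the subspaces $\mathcal{F}_1,\dots,\mathcal{F}_r$ have $\mathbb{F}_{q^m}$ as their best friend, then $d_f(\mathrm{Orb}_\beta(\mathcal{F}))\geq 2mj$. (2) If $d_f(\mathrm{Orb}_\beta(\mathcal{F}))=2m$, then $\mathbb{F}_{q^m}$ is the best friend of exactly one subspace of $\mathcal{F}$.
   Context: $q$ is a prime power and $\mathbb{F}_{q^n}$ is regarded as an $n$-dimensional $\mathbb{F}_q$-vector space; all subspaces are $\mathbb{F}_q$-subspaces. The subspace distance is $d_S(\mathcal{U},\mathcal{V})=\dim(\mathcal{U}+\mathcal{V})-\dim(\mathcal{U}\cap\mathcal{V})$. A flag $\mathcal{F}=(\mathcal{F}_1,\dots,\mathcal{F}_r)$ on $\mathbb{F}_{q^n}$ is a sequence of subspaces $\{0\}\subsetneq\mathcal{F}_1\subsetneq\cdots\subsetneq\mathcal{F}_r\subsetneq\mathbb{F}_{q^n}$; its type is $(\dim\mathcal{F}_1,\dots,\dim\mathcal{F}_r)$. The flag distance between flags of the same type is $d_f(\mathcal{F},\mathcal{F}')=\sum_{i=1}^r d_S(\mathcal{F}_i,\mathcal{F}'_i)$. A flag code is a nonempty set of flags of a fixed type; its minimum distance $d_f(\mathcal{C})$ is the minimum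 of $d_f$ over pairs of distinct elements (and $0$ if $|\mathcal{C}|=1$). For $\beta\in\mathbb{F}_{q^n}^\ast$ of multiplicative order $|\beta|$, $\mathcal{F}\beta=(\mathcal{F}_1\beta,\dots,\mathcal{F}_r\beta)$ and $\mathrm{Orb}_\beta(\mathcal{F})=\{\mathcal{F}\beta^j: 0\le j\le|\beta|-1\}$. A subfield $\mathbb{F}_{q^m}\subseteq\mathbb{F}_{q^n}$ is a friend of a subspace $\mathcal{U}$ if $\mathcal{U}$ is an $\mathbb{F}_{q^m}$-vector space (closed under multiplication by $\mathbb{F}_{q^m}$); the best friend of $\mathcal{U}$ is its largest friend. A subfield is a friend of a flag if it is a friend of all its subspaces; the best friend of a flag is its largest friend. *)

theory Defs
  imports "HOL-Algebra.Algebra"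
begin

text \<open>Setting: R is the finite field F_{q^n} (a HOL-Algebra field record with finite carrier),
  K is the subfield F_q. All subspaces are K-subspaces of carrier R, i.e. subalgebra K U R,
  and dimensions are the HOL-Algebra dimension over K.\<close>

definition subspace_dist :: "('a, 'b) ring_scheme \<Rightarrow> 'a set \<Rightarrow> 'a set \<Rightarrow> 'a set \<Rightarrow> nat" where
  "subspace_dist R K U V =
     ring.dim R K (U <+>\<^bsub>R\<^esub> V) - ring.dim R K (U \<inter> V)"

definition is_flag :: "('a, 'b) ring_scheme \<Rightarrow> 'a set \<Rightarrow> 'a set list \<Rightarrow> bool" where
  "is_flag R K F \<longleftrightarrow> F \<noteq> [] \<and>
     (\<forall>i < length F. subalgebra K (F ! i) R) \<and>
     {\<zero>\<^bsub>R\<^esub>} \<subset> F ! 0 \<and>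
     (\<forall>i. Suc i < length F \<longrightarrow> F ! i \<subset> F ! Suc i) \<and>
     last F \<subset> carrier R"

definition flag_dist :: "('a, 'b) ring_scheme \<Rightarrow> 'a set \<Rightarrow> 'a set list \<Rightarrow> 'a set list \<Rightarrow> nat" where
  "flag_dist R K F G = (\<Sum>i < length F. subspace_dist R K (F ! i) (G ! i))"

definition min_flag_dist :: "('a, 'b) ring_scheme \<Rightarrow> 'a set \<Rightarrow> 'a set list set \<Rightarrow> nat" where
  "min_flag_dist R K C =
     (if card C = 1 then 0
      else Min {flag_dist R K F G | F G. F \<in> C \<and> G \<in> C \<and> F \<noteq> G})"

definition flag_mult :: "('a, 'b) ring_scheme \<Rightarrow> 'a set list \<Rightarrow> 'a \<Rightarrow> 'a set list" where
  "flag_mult R F \<beta> = map (\<lambda>U. (\<lambda>x. x \<otimes>\<^bsub>R\<^esub> \<beta>) ` U) F"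

definition flag_orbit :: "('a, 'b) ring_scheme \<Rightarrow> 'a \<Rightarrow> 'a set list \<Rightarrow> 'a set list set" where
  "flag_orbit R \<beta> F =
     {flag_mult R F (\<beta> [^]\<^bsub>R\<^esub> j) | j. j < group.ord (mult_of R) \<beta>}"

definition friend :: "('a, 'b) ring_scheme \<Rightarrow> 'a set \<Rightarrow> 'a set \<Rightarrow> 'a set \<Rightarrow> bool" where
  "friend R K L U \<longleftrightarrow> subfield L R \<and> K \<subseteq> L \<and> subalgebra L U R"

definition best_friend :: "('a, 'b) ring_scheme \<Rightarrow> 'a set \<Rightarrow> 'a set \<Rightarrow> 'a set \<Rightarrow> bool" where
  "best_friend R K L U \<longleftrightarrow> friend R K L U \<and> (\<forall>L'. friend R K L' U \<longrightarrow> L' \<subseteq> L)"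

definition flag_friend :: "('a, 'b) ring_scheme \<Rightarrow> 'a set \<Rightarrow> 'a set \<Rightarrow> 'a set list \<Rightarrow> bool" where
  "flag_friend R K L F \<longleftrightarrow> subfield L R \<and> K \<subseteq> L \<and> (\<forall>i < length F. friend R K L (F ! i))"

definition flag_best_friend :: "('a, 'b) ring_scheme \<Rightarrow> 'a set \<Rightarrow> 'a set \<Rightarrow> 'a set list \<Rightarrow> bool" where
  "flag_best_friend R K L F \<longleftrightarrow> flag_friend R K L F \<and> (\<forall>L'. flag_friend R K L' F \<longrightarrow> L' \<subseteq> L)"

end

theory Submission
  imports Defs
begin


definition stab :: "('a, 'b) ring_scheme \<Rightarrow> 'a set \<Rightarrow> 'a set" where
  "stab R U = {x \<in> carrier R. \<forall>u\<in>U. x \<otimes>\<^bsub>R\<^esub> u \<in> U}"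

definition smul :: "('a, 'b) ring_scheme \<Rightarrow> 'a set \<Rightarrow> 'a \<Rightarrow> 'a set" where
  "smul R U a = (\<lambda>x. x \<otimes>\<^bsub>R\<^esub> a) ` U"

lemma (in ring) subgroup_props:
  assumes "subgroup U (add_monoid R)"
  shows "U \<subseteq> carrier R" "\<zero> \<in> U" "\<And>x y. x \<in> U \<Longrightarrow> y \<in> U \<Longrightarrow> x \<oplus> y \<in> U"
    "\<And>x. x \<in> U \<Longrightarrow> \<ominus> x \<in> U"
  using subgroup.subset[OF assms] subgroup.one_closed[OF assms] subgroup.m_closed[OF assms]
    subgroup.m_inv_closed[OF assms]
  by (auto simp: a_inv_def)

lemma (in field) stab_subfield:
  assumes "subgroup U (add_monoid R)" and fin: "finite (carrier R)"
  shows "subfield (stab R U) R"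
proof (rule subfieldI'[OF subringI])
  note U = subgroup_props[OF assms(1)]
  show "stab R U \<subseteq> carrier R" by (auto simp: stab_def)
  show "\<one> \<in> stab R U" using U by (auto simp: stab_def)
  show "\<ominus> h \<in> stab R U" if "h \<in> stab R U" for h
    using that U by (auto simp: stab_def l_minus)
  show "h1 \<otimes> h2 \<in> stab R U" if "h1 \<in> stab R U" "h2 \<in> stab R U" for h1 h2
    using that U by (auto simp: stab_def m_assoc subsetD)
  show "h1 \<oplus> h2 \<in> stab R U" if "h1 \<in> stab R U" "h2 \<in> stab R U" for h1 h2
    using that U by (auto simp: stab_def l_distr subsetD)
  show "inv k \<in> stab R U" if k: "k \<in> stab R U - {\<zero>}" for k
  proof -
    have kc: "k \<in> carrier R" "k \<noteq> \<zero>" using k by (auto simp: stab_def)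
    have fU: "finite U" using U(1) fin finite_subset by blast
    have inj: "inj_on (\<lambda>u. k \<otimes> u) U"
      using kc U(1) by (auto simp: inj_on_def) (metis m_lcancel subsetD)
    have "(\<lambda>u. k \<otimes> u) ` U \<subseteq> U" using k by (auto simp: stab_def)
    hence im: "(\<lambda>u. k \<otimes> u) ` U = U"
      using inj fU by (simp add: card_image card_subset_eq)
    have "inv k \<otimes> u \<in> U" if u: "u \<in> U" for u
    proof -
      obtain v where v: "v \<in> U" "u = k \<otimes> v" using u im by blast
      have ku: "k \<in> Units R" using kc field_Units by auto
      have vc: "v \<in> carrier R" using v U(1) by auto
      have "inv k \<otimes> u = (inv k \<otimes> k) \<otimes> v" using v vc ku by (metis m_assoc Units_closed Units_inv_closed)
      also have "\<dots> = v" using ku vc by simp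
      finally have "inv k \<otimes> u = v" .
      thus ?thesis using v by simp
    qed
    thus ?thesis using kc field_Units by (auto simp: stab_def)
  qed
qed

lemma (in ring) subalg_stab:
  assumes "subalgebra K U R" shows "subalgebra (stab R U) U R"
  using assms unfolding subalgebra_def subalgebra_axioms_def stab_def by auto

lemma (in ring) subalg_sub_stab:
  assumes "subalgebra L U R" "L \<subseteq> carrier R" shows "L \<subseteq> stab R U"
  using assms subalgebra.smult_closed[OF assms(1)] unfolding stab_def by auto

lemma (in field) best_friend_iff:
  assumes "subfield K R" "subalgebra K U R" "finite (carrier R)"
  shows "best_friend R K L U \<longleftrightarrow> L = stab R U"
proof -
  have sf: "subfield (stab R U) R"
    using stab_subfield[OF subalgebra.axioms(1)[OF assms(2)] assms(3)] .
  have Kc: "K \<subseteq> carrier R" using subfieldE(3)[OF assms(1)] .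
  have fr: "friend R K (stab R U) U"
    unfolding friend_def using sf subalg_stab[OF assms(2)] subalg_sub_stab[OF assms(2) Kc] by auto
  have le: "L' \<subseteq> stab R U" if "friend R K L' U" for L'
    using that subalg_sub_stab subfieldE(3) unfolding friend_def by blast
  show ?thesis unfolding best_friend_def using fr le by blast
qed

lemma (in ring) finite_dim_carrier:
  assumes "subfield K R" "finite (carrier R)"
  shows "finite_dimension K (carrier R)"
proof -
  obtain xs where xs: "set xs = carrier R" using finite_list[OF assms(2)] by blast
  have "Span K xs \<subseteq> carrier R" using Span_in_carrier subfieldE(3)[OF assms(1)] xs by auto
  moreover have "set xs \<subseteq> Span K xs" using Span_base_incl[OF assms(1)] xs by auto
  ultimately have eq: "Span K xs = carrier R" using xs by auto
  have "finite_dimension K (Span K xs)" using Span_finite_dimension[OF assms(1), of xs] xs by simp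
  thus ?thesis unfolding eq .
qed

lemma (in ring) finite_dim:
  assumes "subfield K R" "finite (carrier R)" "subalgebra K V R"
  shows "finite_dimension K V"
  using subalbegra_incl_imp_finite_dimension[OF assms(1) finite_dim_carrier[OF assms(1,2)] assms(3)]
    subalgebra_in_carrier[OF assms(3)] by blast

lemma (in ring) dim_mono:
  assumes "subfield K R" "finite (carrier R)" "subalgebra K V R" "subalgebra K E R" "V \<subseteq> E"
  shows "dim K V \<le> dim K E" and "dim K V = dim K E \<Longrightarrow> V = E"
proof -
  have dE: "dimension (dim K E) K E"
    using finite_dimensionE[OF assms(1) finite_dim[OF assms(1,2,4)]] by (simp add: over_def)
  have dV: "dimension (dim K V) K V"
    using finite_dimensionE[OF assms(1) finite_dim[OF assms(1,2,3)]] by (simp add: over_def)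
  obtain Us where Us: "set Us \<subseteq> carrier R" "independent K Us" "length Us = dim K V" "Span K Us = V"
    using exists_base[OF assms(1) dV] by blast
  have sub: "set Us \<subseteq> E" using Span_base_incl[OF assms(1) Us(1)] Us(4) assms(5) by auto
  show "dim K V \<le> dim K E"
    using independent_length_le_dimension[OF assms(1) dE Us(2) sub] Us(3) by simp
  show "V = E" if "dim K V = dim K E"
    using independent_length_eq_dimension[OF assms(1) dE Us(2) sub] Us(3,4) that by simp
qed

lemma (in ring) subfield_subalg:
  assumes "subfield S R" "K \<subseteq> S" shows "subalgebra K S R"
  using subring.axioms(1)[OF subfieldE(1)[OF assms(1)]] subringE(6)[OF subfieldE(1)[OF assms(1)]] assms(2)
  unfolding subalgebra_def subalgebra_axioms_def by auto




lemma (in ring) smul_subalg: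
  assumes "subalgebra K U R" "K \<subseteq> carrier R" "a \<in> carrier R"
  shows "subalgebra K (smul R U a) R"
proof -
  note U = subgroup_props[OF subalgebra.axioms(1)[OF assms(1)]]
  have "subgroup (smul R U a) (add_monoid R)"
  proof (rule add.subgroupI)
    show "smul R U a \<subseteq> carrier R" using U assms(3) by (auto simp: smul_def)
    show "smul R U a \<noteq> {}" using U by (auto simp: smul_def)
    show "\<ominus> x \<in> smul R U a" if xx: "x \<in> smul R U a" for x
    proof -
      obtain u where u: "u \<in> U" "x = u \<otimes> a" using xx by (auto simp: smul_def)
      hence "\<ominus> x = (\<ominus> u) \<otimes> a" using U assms(3) by (simp add: l_minus subsetD)
      thus ?thesis using u U by (auto simp: smul_def)
    qed
    show "x \<oplus> y \<in> smul R U a" if xy: "x \<in> smul R U a" "y \<in> smul R U a" for x y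
    proof -
      obtain u where u: "u \<in> U" "x = u \<otimes> a" using xy by (auto simp: smul_def)
      obtain v where v: "v \<in> U" "y = v \<otimes> a" using xy by (auto simp: smul_def)
      hence "x \<oplus> y = (u \<oplus> v) \<otimes> a" using u U assms(3) by (simp add: l_distr subsetD)
      thus ?thesis using u v U by (auto simp: smul_def)
    qed
  qed
  moreover have "k \<otimes> x \<in> smul R U a" if kx: "k \<in> K" "x \<in> smul R U a" for k x
  proof -
    obtain u where u: "u \<in> U" "x = u \<otimes> a" using kx by (auto simp: smul_def)
    hence "k \<otimes> x = (k \<otimes> u) \<otimes> a" using U assms kx by (simp add: m_assoc subsetD)
    thus ?thesis using u subalgebra.smult_closed[OF assms(1) kx(1)] by (auto simp: smul_def)
  qed
  ultimately show ?thesis unfolding subalgebra_def subalgebra_axioms_def by auto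
qed

lemma (in field) dimension_smul:
  assumes "dimension n K E" "subfield K R" "a \<in> carrier R" "a \<noteq> \<zero>"
  shows "dimension n K (smul R E a)"
  using assms
proof (induct rule: dimension.induct)
  case (zero_dim K)
  have "smul R {\<zero>} a = {\<zero>}" using zero_dim by (simp add: smul_def)
  thus ?case by simp
next
  case (Suc_dim v E n K)
  have Ec: "E \<subseteq> carrier R" using space_subgroup_props(1)[OF Suc_dim(5,3)] .
  have Kc: "K \<subseteq> carrier R" using subfieldE(3)[OF Suc_dim(5)] .
  have eq: "smul R (line_extension K v E) a = line_extension K (v \<otimes> a) (smul R E a)"
  proof
    show "smul R (line_extension K v E) a \<subseteq> line_extension K (v \<otimes> a) (smul R E a)"
    proof
      fix x assume "x \<in> smul R (line_extension K v E) a"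
      then obtain k e where ke: "k \<in> K" "e \<in> E" "x = (k \<otimes> v \<oplus> e) \<otimes> a"
        by (auto simp: smul_def line_extension_mem_iff)
      hence "x = k \<otimes> (v \<otimes> a) \<oplus> e \<otimes> a"
        using Kc Ec Suc_dim by (simp add: l_distr m_assoc subsetD)
      thus "x \<in> line_extension K (v \<otimes> a) (smul R E a)"
        using ke by (auto simp: smul_def line_extension_mem_iff)
    qed
    show "line_extension K (v \<otimes> a) (smul R E a) \<subseteq> smul R (line_extension K v E) a"
    proof
      fix x assume "x \<in> line_extension K (v \<otimes> a) (smul R E a)"
      then obtain k e where ke: "k \<in> K" "e \<in> E" "x = k \<otimes> (v \<otimes> a) \<oplus> e \<otimes> a"
        by (auto simp: smul_def line_extension_mem_iff)
      moreover have "k \<in> carrier R" "e \<in> carrier R" using ke Kc Ec by auto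
      ultimately have "x = (k \<otimes> v \<oplus> e) \<otimes> a"
        using Suc_dim by (simp add: l_distr m_assoc)
      moreover have "k \<otimes> v \<oplus> e \<in> line_extension K v E"
        using ke by (auto simp: line_extension_mem_iff)
      ultimately show "x \<in> smul R (line_extension K v E) a"
        by (auto simp: smul_def)
    qed
  qed
  have "v \<otimes> a \<notin> smul R E a"
  proof
    assume "v \<otimes> a \<in> smul R E a"
    then obtain e where e: "e \<in> E" "v \<otimes> a = e \<otimes> a" by (auto simp: smul_def)
    hence "v = e" using Ec Suc_dim by (metis m_rcancel subsetD)
    thus False using e Suc_dim by auto
  qed
  thus ?case unfolding eq using Suc_dim by (auto intro: dimension.Suc_dim)
qed

lemma (in field) dim_smul:
  assumes "subfield K R" "finite (carrier R)" "subalgebra K U R" "a \<in> carrier R" "a \<noteq> \<zero>"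
  shows "dim K (smul R U a) = dim K U"
proof -
  have dU: "dimension (dim K U) K U"
    using finite_dimensionE[OF assms(1) finite_dim[OF assms(1,2,3)]] by (simp add: over_def)
  have "dimension (dim K U) K (smul R U a)" using dimension_smul[OF dU assms(1,4,5)] .
  thus ?thesis using dimI[OF assms(1)] by (simp add: over_def)
qed

lemma (in field) stab_smul:
  assumes "U \<subseteq> carrier R" "a \<in> carrier R" "a \<noteq> \<zero>"
  shows "stab R (smul R U a) = stab R U"
proof
  show "stab R U \<subseteq> stab R (smul R U a)"
  proof
    fix x assume x: "x \<in> stab R U"
    have "x \<otimes> (u \<otimes> a) \<in> smul R U a" if u: "u \<in> U" for u
    proof -
      have "x \<otimes> (u \<otimes> a) = (x \<otimes> u) \<otimes> a" using x u assms by (simp add: m_assoc stab_def subsetD)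
      thus ?thesis using x u by (auto simp: smul_def stab_def)
    qed
    thus "x \<in> stab R (smul R U a)" using x by (auto simp: stab_def smul_def)
  qed
  show "stab R (smul R U a) \<subseteq> stab R U"
  proof
    fix x assume x: "x \<in> stab R (smul R U a)"
    have "x \<otimes> u \<in> U" if u: "u \<in> U" for u
    proof -
      have "x \<otimes> (u \<otimes> a) \<in> smul R U a" using x u by (auto simp: stab_def smul_def)
      then obtain w where w: "w \<in> U" "x \<otimes> (u \<otimes> a) = w \<otimes> a" by (auto simp: smul_def)
      have xc: "x \<in> carrier R" using x by (simp add: stab_def)
      have uc: "u \<in> carrier R" "w \<in> carrier R" using u w assms(1) by auto
      have "(x \<otimes> u) \<otimes> a = w \<otimes> a" using w xc uc assms by (simp add: m_assoc)
      hence "x \<otimes> u = w" using m_rcancel[OF assms(3) assms(2) m_closed[OF xc uc(1)] uc(2)] by simp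
      thus ?thesis using w by simp
    qed
    thus "x \<in> stab R U" using x by (auto simp: stab_def)
  qed
qed

lemma (in ring) smul_smul:
  assumes "U \<subseteq> carrier R" "a \<in> carrier R" "b \<in> carrier R"
  shows "smul R (smul R U a) b = smul R U (a \<otimes> b)"
  using assms unfolding smul_def image_image by (intro image_cong) (auto simp: m_assoc subsetD)

lemma (in ring) smul_one:
  assumes "U \<subseteq> carrier R" shows "smul R U \<one> = U"
proof -
  have "(\<lambda>x. x \<otimes> \<one>) ` U = (\<lambda>x. x) ` U" using assms by (intro image_cong) (auto simp: subsetD)
  thus ?thesis by (simp add: smul_def)
qed

lemma (in field) smul_stab_eq:
  assumes "subgroup U (add_monoid R)" "finite (carrier R)" "g \<in> stab R U" "g \<noteq> \<zero>"
  shows "smul R U g = U"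
proof -
  note U = subgroup_props[OF assms(1)]
  have sf: "subfield (stab R U) R" using stab_subfield[OF assms(1,2)] .
  have gc: "g \<in> carrier R" using assms(3) by (auto simp: stab_def)
  have ig: "inv g \<in> stab R U" using subfield_m_inv(1)[OF sf] assms(3,4) by auto
  show ?thesis
  proof
    show "smul R U g \<subseteq> U"
    proof
      fix x assume "x \<in> smul R U g"
      then obtain u where u: "u \<in> U" "x = u \<otimes> g" by (auto simp: smul_def)
      have "x = g \<otimes> u" using u U gc by (simp add: m_comm subsetD)
      thus "x \<in> U" using assms(3) u by (simp add: stab_def)
    qed
    show "U \<subseteq> smul R U g"
    proof
      fix u assume u: "u \<in> U"
      have igc: "inv g \<in> carrier R" using ig by (auto simp: stab_def)
      have "inv g \<otimes> u \<in> U" using ig u by (auto simp: stab_def)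
      moreover have "(inv g \<otimes> u) \<otimes> g = u"
      proof -
        have gu: "g \<in> Units R" using gc assms(4) field_Units by auto
        have uc: "u \<in> carrier R" using u U by auto
        have "(inv g \<otimes> u) \<otimes> g = (inv g \<otimes> g) \<otimes> u"
          using gc igc uc by (metis m_assoc m_comm m_closed)
        also have "\<dots> = u" using gu uc by simp
        finally show ?thesis .
      qed
      ultimately show "u \<in> smul R U g" unfolding smul_def by (metis image_eqI)
    qed
  qed
qed

lemma (in cring) smul_eq_stab:
  assumes "U \<subseteq> carrier R" "g \<in> carrier R" "smul R U g = U"
  shows "g \<in> stab R U"
proof -
  have "g \<otimes> u \<in> U" if uu: "u \<in> U" for u
  proof -
    have "u \<otimes> g \<in> smul R U g" using uu by (auto simp: smul_def)
    thus ?thesis using assms uu by (simp add: m_comm subsetD)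
  qed
  thus ?thesis using assms by (auto simp: stab_def)
qed




lemma (in field) key_dist:
  assumes K: "subfield K R" and fin: "finite (carrier R)" and U: "subalgebra K U R"
    and g: "g \<in> carrier R" "g \<noteq> \<zero>" "g \<notin> stab R U"
  shows "2 * dim K (stab R U) \<le> subspace_dist R K U (smul R U g)"
proof -
  define S where "S = stab R U"
  define V where "V = smul R U g"
  have Ug: "subgroup U (add_monoid R)" using subalgebra.axioms(1)[OF U] .
  have Ucar: "U \<subseteq> carrier R" using subalgebra_in_carrier[OF U] .
  have sf: "subfield S R" unfolding S_def using stab_subfield[OF Ug fin] .
  have Sc: "S \<subseteq> carrier R" using subfieldE(3)[OF sf] .
  have KS: "K \<subseteq> S" unfolding S_def using subalg_sub_stab[OF U subfieldE(3)[OF K]] .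
  have US: "subalgebra S U R" unfolding S_def using subalg_stab[OF U] .
  have VS: "subalgebra S V R" unfolding V_def using smul_subalg[OF US Sc g(1)] .
  have UV: "U \<noteq> V"
  proof
    assume "U = V"
    hence "g \<in> stab R U" using smul_eq_stab[OF Ucar g(1)] unfolding V_def by simp
    thus False using g(3) by simp
  qed
  have dV: "dim S V = dim S U" unfolding V_def using dim_smul[OF sf fin US g(1,2)] .
  define W where "W = U \<inter> V"
  have WS: "subalgebra S W R" unfolding W_def using subalgebra_inter[OF US VS] .
  have nsub: "\<not> U \<subseteq> V"
  proof
    assume "U \<subseteq> V"
    hence "U = V" using dim_mono(2)[OF sf fin US VS] dV by simp
    thus False using UV by simp
  qed
  have WU: "W \<subseteq> U" "W \<noteq> U" using nsub unfolding W_def by auto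
  have wlt: "dim S W < dim S U"
    using dim_mono[OF sf fin WS US WU(1)] WU(2) by (meson le_neq_implies_less)
  have fU: "finite_dimension S U" using finite_dim[OF sf fin US] .
  have fV: "finite_dimension S V" using finite_dim[OF sf fin VS] .
  have fW: "finite_dimension S W" using finite_dim[OF sf fin WS] .
  have fSum: "finite_dimension S (U <+>\<^bsub>R\<^esub> V)" using sum_space_dim(1)[OF sf fU fV] .
  have gr: "dim S (U <+>\<^bsub>R\<^esub> V) = dim S U + dim S V - dim S W"
    using sum_space_dim(2)[OF sf fU fV] unfolding W_def over_def .
  have fKS: "finite_dimension K S" using finite_dim[OF K fin subfield_subalg[OF sf KS]] .
  have t1: "dim K (U <+>\<^bsub>R\<^esub> V) = dim K S * dim S (U <+>\<^bsub>R\<^esub> V)"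
    using telescopic_base_dim(2)[OF K sf fKS fSum] unfolding over_def .
  have t2: "dim K W = dim K S * dim S W"
    using telescopic_base_dim(2)[OF K sf fKS fW] unfolding over_def .
  have "subspace_dist R K U V = dim K S * dim S (U <+>\<^bsub>R\<^esub> V) - dim K S * dim S W"
    unfolding subspace_dist_def t1 W_def[symmetric] t2 ..
  also have "\<dots> = dim K S * (dim S (U <+>\<^bsub>R\<^esub> V) - dim S W)"
    by (simp add: diff_mult_distrib2)
  finally have eq: "subspace_dist R K U V = dim K S * (dim S (U <+>\<^bsub>R\<^esub> V) - dim S W)" .
  have "2 \<le> dim S (U <+>\<^bsub>R\<^esub> V) - dim S W" using gr dV wlt by linarith
  hence "dim K S * 2 \<le> dim K S * (dim S (U <+>\<^bsub>R\<^esub> V) - dim S W)" by (rule mult_left_mono) simp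
  thus ?thesis unfolding eq S_def[symmetric] V_def[symmetric] by simp
qed




lemma (in field) pair_bound:
  assumes K: "subfield K R" and fin: "finite (carrier R)"
    and Fsub: "\<And>i. i < length F \<Longrightarrow> subalgebra K (F ! i) R"
    and LS: "\<And>i. i < length F \<Longrightarrow> L \<subseteq> stab R (F ! i)"
    and a: "a \<in> carrier R" "a \<noteq> \<zero>" and b: "b \<in> carrier R" "b \<noteq> \<zero>"
    and ne: "flag_mult R F a \<noteq> flag_mult R F b"
  shows "\<exists>I. I \<subseteq> {..<length F} \<and> I \<noteq> {} \<and> {i. i < length F \<and> stab R (F ! i) = L} \<subseteq> I \<and>
          (\<Sum>i\<in>I. 2 * dim K (stab R (F ! i))) \<le> flag_dist R K (flag_mult R F a) (flag_mult R F b)"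
proof -
  define n where "n = length F"
  define g where "g = inv a \<otimes> b"
  have au: "a \<in> Units R" "b \<in> Units R" using a b field_Units by auto
  have gu: "g \<in> Units R" unfolding g_def using au by simp
  have gc: "g \<in> carrier R" "g \<noteq> \<zero>" using gu field_Units by auto
  have ag: "a \<otimes> g = b" unfolding g_def using au by (simp add: m_assoc[symmetric] Units_closed)
  define I where "I = {i. i < n \<and> g \<notin> stab R (F ! i)}"
  have Fc: "F ! i \<subseteq> carrier R" if "i < n" for i
    using subalgebra_in_carrier[OF Fsub] that n_def by auto
  have Pi: "flag_mult R F a ! i = smul R (F ! i) a" if "i < n" for i
    using that n_def by (simp add: flag_mult_def smul_def)
  have Qi: "flag_mult R F b ! i = smul R (smul R (F ! i) a) g" if "i < n" for i
    using that n_def smul_smul[OF Fc[OF that] a(1) gc(1)] ag by (simp add: flag_mult_def smul_def)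
  have Ui: "subalgebra K (smul R (F ! i) a) R" if "i < n" for i
    using smul_subalg[OF Fsub subfieldE(3)[OF K] a(1)] that n_def by auto
  have Si: "stab R (smul R (F ! i) a) = stab R (F ! i)" if "i < n" for i
    using stab_smul[OF Fc[OF that] a] .
  have same: "flag_mult R F a ! i = flag_mult R F b ! i" if "i < n" "i \<notin> I" for i
  proof -
    have "g \<in> stab R (smul R (F ! i) a)" using that Si unfolding I_def by auto
    hence "smul R (smul R (F ! i) a) g = smul R (F ! i) a"
      using smul_stab_eq[OF subalgebra.axioms(1)[OF Ui[OF that(1)]] fin _ gc(2)] by simp
    thus ?thesis using Pi Qi that by simp
  qed
  have Ine: "I \<noteq> {}"
  proof
    assume "I = {}"
    hence "flag_mult R F a = flag_mult R F b"
      using same by (intro nth_equalityI) (auto simp: flag_mult_def n_def)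
    thus False using ne by simp
  qed
  have JI: "{i. i < n \<and> stab R (F ! i) = L} \<subseteq> I"
  proof -
    have "g \<notin> L"
    proof
      assume gL: "g \<in> L"
      have "i \<notin> I" if "i < n" for i using LS[of i] that gL n_def unfolding I_def by auto
      thus False using Ine unfolding I_def by auto
    qed
    thus ?thesis unfolding I_def by auto
  qed
  have bnd: "2 * dim K (stab R (F ! i)) \<le>
      subspace_dist R K (flag_mult R F a ! i) (flag_mult R F b ! i)" if "i \<in> I" for i
  proof -
    have i: "i < n" "g \<notin> stab R (F ! i)" using that I_def by auto
    show ?thesis
      using key_dist[OF K fin Ui[OF i(1)] gc] Si[OF i(1)] i Pi Qi by simp
  qed
  have "(\<Sum>i\<in>I. 2 * dim K (stab R (F ! i))) \<le>
      (\<Sum>i\<in>I. subspace_dist R K (flag_mult R F a ! i) (flag_mult R F b ! i))"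
    using bnd by (rule sum_mono)
  also have "\<dots> \<le> (\<Sum>i<n. subspace_dist R K (flag_mult R F a ! i) (flag_mult R F b ! i))"
    by (rule sum_mono2) (auto simp: I_def)
  also have "\<dots> = flag_dist R K (flag_mult R F a) (flag_mult R F b)"
    by (simp add: flag_dist_def flag_mult_def n_def)
  finally have "(\<Sum>i\<in>I. 2 * dim K (stab R (F ! i))) \<le> flag_dist R K (flag_mult R F a) (flag_mult R F b)" .
  moreover have "I \<subseteq> {..<length F}" unfolding I_def n_def by auto
  ultimately show ?thesis using Ine JI unfolding n_def by blast
qed




theorem mainTheorem1:
  fixes R :: "('a, 'b) ring_scheme" and K L :: "'a set" and F :: "'a set list" and \<beta> :: 'a
    and m :: nat
  assumes "field R" and "finite (carrier R)"
    and "subfield K R"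
    and "is_flag R K F"
    and "flag_best_friend R K L F"
    and "m = ring.dim R K L"
    and "\<beta> \<in> carrier R - L"
  shows "(\<forall>j. j \<ge> 1 \<longrightarrow> card {i. i < length F \<and> best_friend R K L (F ! i)} = j \<longrightarrow>
            min_flag_dist R K (flag_orbit R \<beta> F) \<ge> 2 * m * j)
       \<and> (min_flag_dist R K (flag_orbit R \<beta> F) = 2 * m \<longrightarrow>
            card {i. i < length F \<and> best_friend R K L (F ! i)} = 1)"
proof -
  interpret field R by fact
  note fin = assms(2) and K = assms(3)
  define n where "n = length F"
  have Fsub: "\<And>i. i < length F \<Longrightarrow> subalgebra K (F ! i) R"
    using assms(4) unfolding is_flag_def by auto
  have fl: "flag_friend R K L F" using assms(5) unfolding flag_best_friend_def by auto
  have Lf: "subfield L R" "K \<subseteq> L" using fl unfolding flag_friend_def by auto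
  have LS: "\<And>i. i < length F \<Longrightarrow> L \<subseteq> stab R (F ! i)"
    using fl subalg_sub_stab subfieldE(3)[OF Lf(1)] unfolding flag_friend_def friend_def by blast
  define J where "J = {i. i < length F \<and> stab R (F ! i) = L}"
  have Jeq: "{i. i < length F \<and> best_friend R K L (F ! i)} = J"
    unfolding J_def using best_friend_iff[OF K Fsub fin] by auto
  have Sf: "\<And>i. i < length F \<Longrightarrow> subfield (stab R (F ! i)) R"
    using stab_subfield[OF subalgebra.axioms(1)[OF Fsub] fin] .
  have LK: "subalgebra K L R" using subfield_subalg[OF Lf] .
  have SK: "\<And>i. i < length F \<Longrightarrow> subalgebra K (stab R (F ! i)) R"
    using subfield_subalg[OF Sf] LS Lf(2) by blast
  have mle: "\<And>i. i < length F \<Longrightarrow> m \<le> dim K (stab R (F ! i))"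
    using dim_mono(1)[OF K fin LK SK LS] assms(6) by simp
  have meq: "\<And>i. i < length F \<Longrightarrow> dim K (stab R (F ! i)) \<le> m \<Longrightarrow> stab R (F ! i) = L"
    using dim_mono(2)[OF K fin LK SK LS] dim_mono(1)[OF K fin LK SK LS] assms(6) by fastforce
  have m1: "1 \<le> m"
  proof (rule ccontr)
    assume "\<not> 1 \<le> m"
    hence "m = 0" by simp
    hence "dimension 0 K L"
      using finite_dimensionE[OF K finite_dim[OF K fin LK]] assms(6) by (simp add: over_def)
    hence "L = {\<zero>\<^bsub>R\<^esub>}" using dimension_zero[OF K] by simp
    thus False using subringE(3)[OF subfieldE(1)[OF Lf(1)]] by simp
  qed
  have bc: "\<beta> \<in> carrier R" "\<beta> \<noteq> \<zero>\<^bsub>R\<^esub>" "\<beta> \<notin> L"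
    using assms(7) subringE(2)[OF subfieldE(1)[OF Lf(1)]] by auto
  have mo: "mult_of R = Multiplicative_Group.mult_of R"
    by (simp add: Ring_Divisibility.mult_of_def Multiplicative_Group.mult_of_def)
  interpret G: group "mult_of R" unfolding mo by (rule field_mult_group)
  have bG: "\<beta> \<in> carrier (mult_of R)" using bc by simp
  have powc: "\<And>j::nat. \<beta> [^]\<^bsub>R\<^esub> j \<in> carrier R \<and> \<beta> [^]\<^bsub>R\<^esub> j \<noteq> \<zero>\<^bsub>R\<^esub>"
    using mult_of.nat_pow_closed[OF bG] by (simp add: Ring_Divisibility.nat_pow_mult_of)
  define ob where "ob = G.ord \<beta>"
  have o0: "ob \<noteq> 0"
  proof
    assume "ob = 0"
    hence "order (mult_of R) = 0" using G.ord_dvd_group_order[OF bG] unfolding ob_def by simp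
    moreover have "\<one>\<^bsub>R\<^esub> \<in> carrier (mult_of R)" by simp
    ultimately show False using fin mult_of.order_gt_0_iff_finite by auto
  qed
  have o1: "ob \<noteq> 1"
  proof
    assume "ob = 1"
    hence "\<beta> = \<one>\<^bsub>R\<^esub>" using G.ord_eq_1[OF bG] unfolding ob_def by simp
    thus False using bc(3) subringE(3)[OF subfieldE(1)[OF Lf(1)]] by simp
  qed
  define C where "C = flag_orbit R \<beta> F"
  have Ceq: "C = (\<lambda>j. flag_mult R F (\<beta> [^]\<^bsub>R\<^esub> j)) ` {..<ob}"
    unfolding C_def flag_orbit_def ob_def by auto
  have Cfin: "finite C" unfolding Ceq by simp
  have C0: "flag_mult R F \<one>\<^bsub>R\<^esub> \<in> C" unfolding Ceq using o0 by (auto intro!: image_eqI[of _ _ 0])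
  have C1: "flag_mult R F \<beta> \<in> C" unfolding Ceq using o0 o1 bc(1) by (auto intro!: image_eqI[of _ _ 1])
  define D where "D = {flag_dist R K P Q | P Q. P \<in> C \<and> Q \<in> C \<and> P \<noteq> Q}"
  have Dfin: "finite D"
  proof -
    have "D \<subseteq> (\<lambda>(P, Q). flag_dist R K P Q) ` (C \<times> C)" unfolding D_def by auto
    thus ?thesis using Cfin finite_subset by blast
  qed
  have Dprop: "2 * m * card J \<le> d \<and> (d = 2 * m \<longrightarrow> card J = 1)" if d: "d \<in> D" for d
  proof -
    obtain ja jb :: nat where jab: "d = flag_dist R K (flag_mult R F (\<beta> [^]\<^bsub>R\<^esub> ja)) (flag_mult R F (\<beta> [^]\<^bsub>R\<^esub> jb))"
      "flag_mult R F (\<beta> [^]\<^bsub>R\<^esub> ja) \<noteq> flag_mult R F (\<beta> [^]\<^bsub>R\<^esub> jb)"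
      using d unfolding D_def Ceq by auto
    obtain I where I: "I \<subseteq> {..<length F}" "I \<noteq> {}" "J \<subseteq> I"
      "(\<Sum>i\<in>I. 2 * dim K (stab R (F ! i))) \<le> d"
      using pair_bound[OF K fin Fsub LS _ _ _ _ jab(2)] powc jab(1) unfolding J_def by blast
    have If: "finite I" using I(1) finite_subset by blast
    have "2 * m * card I = (\<Sum>i\<in>I. 2 * m)" by simp
    also have "\<dots> \<le> (\<Sum>i\<in>I. 2 * dim K (stab R (F ! i)))"
      using mle I(1) by (intro sum_mono) auto
    finally have cI: "2 * m * card I \<le> d" using I(4) by simp
    have "card J \<le> card I" using card_mono[OF If I(3)] .
    hence "2 * m * card J \<le> 2 * m * card I" by (rule mult_left_mono) simp
    hence part1: "2 * m * card J \<le> d" using cI by (rule order_trans)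
    have part2: "card J = 1" if "d = 2 * m"
    proof -
      have "card I \<le> 1" using cI that m1 by simp
      moreover have "card I \<noteq> 0" using If I(2) by simp
      ultimately have "card I = 1" by linarith
      then obtain i0 where i0: "I = {i0}" by (rule card_1_singletonE)
      hence "2 * dim K (stab R (F ! i0)) \<le> d" using I(4) by simp
      hence "stab R (F ! i0) = L" using meq[of i0] i0 I(1) that by auto
      hence "i0 \<in> J" using i0 I(1) unfolding J_def by auto
      hence "J = {i0}" using I(3) i0 by auto
      thus ?thesis by simp
    qed
    show ?thesis using part1 part2 by simp
  qed
  have Cnot1: "card C \<noteq> 1" if Jne: "J \<noteq> {}"
  proof
    assume "card C = 1"
    then obtain P where "C = {P}" using card_1_singletonE by blast
    hence eq: "flag_mult R F \<one>\<^bsub>R\<^esub> = flag_mult R F \<beta>" using C0 C1 by simp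
    obtain i0 where i0: "i0 < length F" "stab R (F ! i0) = L" using Jne unfolding J_def by auto
    have Fc: "F ! i0 \<subseteq> carrier R" using subalgebra_in_carrier[OF Fsub[OF i0(1)]] .
    have "smul R (F ! i0) \<beta> = smul R (F ! i0) \<one>\<^bsub>R\<^esub>"
      using arg_cong[OF eq, of "\<lambda>zs. zs ! i0"] i0(1) by (simp add: flag_mult_def smul_def)
    hence "smul R (F ! i0) \<beta> = F ! i0" using smul_one[OF Fc] by simp
    hence "\<beta> \<in> stab R (F ! i0)" using smul_eq_stab[OF Fc bc(1)] by simp
    thus False using i0 bc by simp
  qed
  have minD: "min_flag_dist R K C = Min D \<and> Min D \<in> D \<and> (\<forall>d\<in>D. Min D \<le> d)" if "card C \<noteq> 1"
  proof -
    have "card C \<noteq> 0" using C0 Cfin by auto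
    hence "\<not> card C \<le> Suc 0" using that by linarith
    then obtain P Q where "P \<in> C" "Q \<in> C" "P \<noteq> Q"
      using card_le_Suc0_iff_eq[OF Cfin] by blast
    hence "D \<noteq> {}" unfolding D_def by auto
    thus ?thesis using Dfin that unfolding min_flag_dist_def D_def[symmetric] by auto
  qed
  show ?thesis
  proof (intro conjI allI impI)
    fix j assume j: "1 \<le> j" "card {i. i < length F \<and> best_friend R K L (F ! i)} = j"
    hence "J \<noteq> {}" using Jeq by auto
    hence "card C \<noteq> 1" by (rule Cnot1)
    hence "min_flag_dist R K C = Min D" "Min D \<in> D" using minD by auto
    thus "2 * m * j \<le> min_flag_dist R K (flag_orbit R \<beta> F)"
      using Dprop j Jeq unfolding C_def by auto
  next
    assume h: "min_flag_dist R K (flag_orbit R \<beta> F) = 2 * m"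
    have "card C \<noteq> 1"
    proof
      assume "card C = 1"
      hence "min_flag_dist R K C = 0" by (simp add: min_flag_dist_def)
      thus False using h m1 unfolding C_def by simp
    qed
    hence "min_flag_dist R K C = Min D" "Min D \<in> D" using minD by auto
    thus "card {i. i < length F \<and> best_friend R K L (F ! i)} = 1"
      using Dprop h Jeq unfolding C_def by auto
  qed
qed


end
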